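(* Let $f:\mathbb{R}^n\times\mathbb{R}^m\to\mathbb{R}^n$ be a polynomial map and let $\boldsymbol\psi:\mathbb{R}^n\to\mathbb{R}^m$ be a function whose graph admits the representation \[ \{(x,\boldsymbol\psi(x)) : x\in\mathbb{R}^n\} = \{(x,u)\in\mathbb{R}^n\times\mathbb{R}^m \mid \exists\,\lambda\in\mathbb{R}^{n_\lambda}\ \text{s.t.}\ g(x,u,\lambda)\ge 0,\ h(x,u,\lambda)=0\} \] for some vector-valued polynomial maps $g,h$ (inequalities componentwise). Consider the closed-loop system $x_{k+1} = f(x_k,\boldsymbol\psi(x_k))$. Let \[ \mathbf{K} = \{(x,u,\lambda,x^+,u^+,\lambda^+) \mid x^+ = f(x,u),\ g(x,u,\lambda)\ge 0,\ h(x,u,\lambda)=0,\ g(x^+,u^+,\lambda^+)\ge 0,\ h(x^+,u^+,\lambda^+)=0\}. \] Suppose a continuous function $V:\mathbb{R}^n\times\mathbb{R}^m\times\mathbb{R}^{n_\lambda}\to\mathbb{R}$ satisfies, for all $(x,u,\lambda,x^+,u^+,\lambda^+)\in\mathbf{K}$, \[ V(x^+,u^+,\lambda^+) - V(x,u,\lambda) \le -\|x\|_2^2, \qquad V(x,u,\lambda)\ge 0. \] Then: (1) the closed-loop system is globally attractive, i.e., $x_k\to 0$ for every initial condition $x_0$; (2) if in addition the function $x\mapsto \inf\{\|u\|_2+\|\lambda\|_2 \mid g(x,u,\lambda)\ge 0,\ h(x,u,\lambda)=0\}$ is bounded on some neighborhood of the origin, or $V$ does not depend on $(u,\lambda)$,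 then the closed-loop system is globally asymptotically stable.
   Context: The closed-loop system $x^+=f(x,\boldsymbol\psi(x))$ is called globally asymptotically stable if (i) for all initial conditions $x_0$, $\lim_{k\to\infty}x_k = 0$ (global attractivity), and (ii) for every $\epsilon>0$ there exists $\delta>0$ such that $\|x_0\|_2\le\delta$ implies $\|x_k\|_2\le\epsilon$ for all $k$ (Lyapunov stability). *)

theory Defs
  imports "HOL-Analysis.Analysis"
begin

inductive poly_fun :: "('a::euclidean_space \<Rightarrow> real) \<Rightarrow> bool" where
  poly_const: "poly_fun (\<lambda>x. c)"
| poly_lin:   "poly_fun (\<lambda>x. x \<bullet> b)"
| poly_add:   "poly_fun p \<Longrightarrow> poly_fun q \<Longrightarrow> poly_fun (\<lambda>x. p x + q x)"
| poly_mult:  "poly_fun p \<Longrightarrow> poly_fun q \<Longrightarrow> poly_fun (\<lambda>x. p x * q x)"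

definition poly_map :: "('a::euclidean_space \<Rightarrow> 'b::euclidean_space) \<Rightarrow> bool" where
  "poly_map F \<longleftrightarrow> (\<forall>b\<in>Basis. poly_fun (\<lambda>x. F x \<bullet> b))"

definition globally_attractive :: "('a::real_normed_vector \<Rightarrow> 'a) \<Rightarrow> bool" where
  "globally_attractive F \<longleftrightarrow> (\<forall>x0. (\<lambda>k. (F ^^ k) x0) \<longlonglongrightarrow> 0)"

definition lyapunov_stable :: "('a::real_normed_vector \<Rightarrow> 'a) \<Rightarrow> bool" where
  "lyapunov_stable F \<longleftrightarrow>
     (\<forall>\<epsilon>>0. \<exists>\<delta>>0. \<forall>x0. norm x0 \<le> \<delta> \<longrightarrow> (\<forall>k. norm ((F ^^ k) x0) \<le> \<epsilon>))"

definition GAS :: "('a::real_normed_vector \<Rightarrow> 'a) \<Rightarrow> bool" where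
  "GAS F \<longleftrightarrow> globally_attractive F \<and> lyapunov_stable F"

end

theory Submission
  imports Defs
begin

lemma mono_iter:
  fixes F :: "'a::real_normed_vector \<Rightarrow> 'a" and W :: "'a \<Rightarrow> real"
  assumes dec: "\<forall>y. W (F y) \<le> W y - norm y ^ 2"
  shows "W ((F ^^ k) x) \<le> W x"
proof (induction k)
  case (Suc k)
  have "W ((F ^^ Suc k) x) \<le> W ((F ^^ k) x) - norm ((F ^^ k) x) ^ 2" using dec by simp
  also have "\<dots> \<le> W ((F ^^ k) x)" by simp
  finally show ?case using Suc by linarith
qed simp

lemma sum_iter:
  fixes F :: "'a::real_normed_vector \<Rightarrow> 'a" and W :: "'a \<Rightarrow> real"
  assumes dec: "\<forall>y. W (F y) \<le> W y - norm y ^ 2"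
  shows "(\<Sum>j<k. norm ((F ^^ j) x) ^ 2) \<le> W x - W ((F ^^ k) x)"
proof (induction k)
  case (Suc k)
  have "W ((F ^^ Suc k) x) \<le> W ((F ^^ k) x) - norm ((F ^^ k) x) ^ 2" using dec by simp
  then show ?case using Suc by simp
qed simp

lemma att_lemma:
  fixes F :: "'a::real_normed_vector \<Rightarrow> 'a" and W :: "'a \<Rightarrow> real"
  assumes dec: "\<forall>y. W (F y) \<le> W y - norm y ^ 2"
    and nn: "\<forall>y. W y \<ge> 0"
  shows "globally_attractive F"
  unfolding globally_attractive_def
proof
  fix x
  have "summable (\<lambda>j. norm ((F ^^ j) x) ^ 2)"
  proof (rule summableI_nonneg_bounded)
    fix k
    show "(\<Sum>j<k. norm ((F ^^ j) x) ^ 2) \<le> W x"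
      using sum_iter[OF dec, where k=k and x=x] nn by smt
  qed simp
  then have "(\<lambda>j. norm ((F ^^ j) x) ^ 2) \<longlonglongrightarrow> 0" by (rule summable_LIMSEQ_zero)
  then have "(\<lambda>j. sqrt (norm ((F ^^ j) x) ^ 2)) \<longlonglongrightarrow> sqrt 0" by (rule tendsto_real_sqrt)
  then have "(\<lambda>j. norm ((F ^^ j) x)) \<longlonglongrightarrow> 0" by simp
  then show "(\<lambda>k. (F ^^ k) x) \<longlonglongrightarrow> 0" by (simp add: tendsto_norm_zero_iff)
qed

lemma core:
  fixes F :: "'a::real_normed_vector \<Rightarrow> 'a" and W :: "'a \<Rightarrow> real"
  assumes dec: "\<forall>y. W (F y) \<le> W y - norm y ^ 2"
    and att: "\<forall>x. (\<lambda>k. (F ^^ k) x) \<longlonglongrightarrow> 0"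
    and sub: "\<forall>y. y \<longlonglongrightarrow> 0 \<longrightarrow> (\<exists>r. strict_mono r \<and> (\<lambda>j. W (y (r j))) \<longlonglongrightarrow> c)"
  shows "lyapunov_stable F"
proof -
  have low: "W x \<ge> norm x ^ 2 + c" for x
  proof -
    define y where "y k = (F ^^ k) (F x)" for k
    have "y \<longlonglongrightarrow> 0" using att unfolding y_def by simp
    then obtain r where r: "strict_mono r" "(\<lambda>j. W (y (r j))) \<longlonglongrightarrow> c" using sub by blast
    have "W (y k) \<le> W x - norm x ^ 2" for k
      using mono_iter[OF dec, where k=k and x="F x"] dec unfolding y_def by smt
    then have "c \<le> W x - norm x ^ 2" using r(2) by (intro LIMSEQ_le_const2) auto
    then show ?thesis by simp
  qed
  show ?thesis unfolding lyapunov_stable_def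
  proof (rule ccontr)
    assume "\<not> (\<forall>\<epsilon>>0. \<exists>\<delta>>0. \<forall>x0. norm x0 \<le> \<delta> \<longrightarrow> (\<forall>k. norm ((F ^^ k) x0) \<le> \<epsilon>))"
    then obtain e where e: "e > 0" and H: "\<forall>\<delta>>0. \<exists>x0. norm x0 \<le> \<delta> \<and> (\<exists>k. norm ((F ^^ k) x0) > e)"
      by (auto simp: not_le)
    have "\<forall>j. \<exists>x0. norm x0 \<le> 1 / (real j + 1) \<and> (\<exists>k. norm ((F ^^ k) x0) > e)"
      using H by simp
    then obtain X K where XK: "\<And>j. norm (X j) \<le> 1 / (real j + 1)" "\<And>j. norm ((F ^^ K j) (X j)) > e"
      by metis
    have "X \<longlonglongrightarrow> 0"
    proof (rule tendsto_norm_zero_iff[THEN iffD1], rule tendsto_sandwich[where f="\<lambda>_. 0" and h="\<lambda>j. 1 / (real j + 1)"])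
      show "\<forall>\<^sub>F n in sequentially. 0 \<le> norm (X n)" by simp
      show "\<forall>\<^sub>F n in sequentially. norm (X n) \<le> 1 / (real n + 1)" using XK by simp
      show "(\<lambda>n. 1 / (real n + 1)) \<longlonglongrightarrow> 0" using LIMSEQ_inverse_real_of_nat by (simp add: inverse_eq_divide add.commute)
    qed simp
    then obtain r where r: "strict_mono r" "(\<lambda>j. W (X (r j))) \<longlonglongrightarrow> c" using sub by blast
    have "W (X j) \<ge> e ^ 2 + c" for j
    proof -
      have "e ^ 2 \<le> norm ((F ^^ K j) (X j)) ^ 2" using XK(2)[of j] e
        by (intro power_mono) auto
      then show ?thesis using low[of "(F ^^ K j) (X j)"] mono_iter[OF dec, where k="K j" and x="X j"] by linarith
    qed
    then have "e ^ 2 + c \<le> c" using r(2) by (intro LIMSEQ_le_const) auto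
    then show False using e by simp
  qed
qed


lemma poly_fun_cont: "poly_fun p \<Longrightarrow> continuous_on UNIV p"
  by (induction rule: poly_fun.induct) (auto intro!: continuous_intros)

lemma poly_map_comp_cont:
  fixes G :: "'a::euclidean_space \<Rightarrow> real^'q"
  assumes "poly_map G"
  shows "continuous_on UNIV (\<lambda>p. G p $ i)"
proof -
  have "poly_fun (\<lambda>p. G p \<bullet> axis i 1)" using assms unfolding poly_map_def by simp
  then show ?thesis by (simp add: cart_eq_inner_axis poly_fun_cont)
qed

theorem theorem1:
  fixes f :: "(real^'n) \<times> (real^'m) \<Rightarrow> real^'n"
    and \<psi> :: "real^'n \<Rightarrow> real^'m"
    and g :: "(real^'n) \<times> (real^'m) \<times> (real^'l) \<Rightarrow> real^'p"
    and h :: "(real^'n) \<times> (real^'m) \<times> (real^'l) \<Rightarrow> real^'q"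
    and V :: "(real^'n) \<times> (real^'m) \<times> (real^'l) \<Rightarrow> real"
  assumes f_poly: "poly_map f"
    and g_poly: "poly_map g"
    and h_poly: "poly_map h"
    and graph: "\<forall>x u. u = \<psi> x \<longleftrightarrow>
                   (\<exists>l. (\<forall>i. g (x, u, l) $ i \<ge> 0) \<and> h (x, u, l) = 0)"
    and V_cont: "continuous_on UNIV V"
    and V_dec: "\<forall>x u l x' u' l'.
                  x' = f (x, u) \<and> (\<forall>i. g (x, u, l) $ i \<ge> 0) \<and> h (x, u, l) = 0
                  \<and> (\<forall>i. g (x', u', l') $ i \<ge> 0) \<and> h (x', u', l') = 0
                  \<longrightarrow> V (x', u', l') - V (x, u, l) \<le> - (norm x ^ 2) \<and> V (x, u, l) \<ge> 0"
  shows "globally_attractive (\<lambda>x. f (x, \<psi> x))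
    \<and> (((\<exists>U. open U \<and> (0::real^'n) \<in> U \<and>
            bounded ((\<lambda>x. Inf {norm u + norm l | u l.
                        (\<forall>i. g (x, u, l) $ i \<ge> 0) \<and> h (x, u, l) = 0}) ` U))
         \<or> (\<forall>x u l u' l'. V (x, u, l) = V (x, u', l')))
       \<longrightarrow> GAS (\<lambda>x. f (x, \<psi> x)))"
proof -
  define F where "F = (\<lambda>x. f (x, \<psi> x))"
  define feas where "feas p \<longleftrightarrow> (\<forall>i. g p $ i \<ge> 0) \<and> h p = 0" for p
  have gr: "(\<exists>l. feas (x,u,l)) \<longleftrightarrow> u = \<psi> x" for x u
  proof -
    show ?thesis using graph[rule_format, where x=x and u=u] unfolding feas_def by simp
  qed
  have dec: "V (F x,u',l') \<le> V (x,u,l) - norm x ^ 2 \<and> V (x,u,l) \<ge> 0"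
    if "feas (x,u,l)" "feas (F x, u', l')" for x u l u' l'
  proof -
    have "u = \<psi> x" using gr that(1) by blast
    have "f (x,u) = F x" unfolding F_def using \<open>u = \<psi> x\<close> by simp
    then show ?thesis using V_dec[rule_format, where x=x and u=u and l=l and x'="F x" and u'=u' and l'=l'] that unfolding feas_def by auto
  qed
  have nn: "V (x,u,l) \<ge> 0" if "feas (x,u,l)" for x u l
  proof -
    obtain l' where "feas (F x, \<psi> (F x), l')" using gr by blast
    then show ?thesis using dec that by blast
  qed
  define L1 where "L1 y = (SOME l. feas (y, \<psi> y, l))" for y
  have L1: "feas (y, \<psi> y, L1 y)" for y unfolding L1_def using gr by (metis someI_ex)
  define W1 where "W1 y = V (y, \<psi> y, L1 y)" for y
  have dec1: "\<forall>y. W1 (F y) \<le> W1 y - norm y ^ 2" unfolding W1_def using dec L1 by blast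
  have att: "globally_attractive F"
    by (rule att_lemma[OF dec1]) (use nn L1 W1_def in auto)
  then have attx: "\<forall>x. (\<lambda>k. (F ^^ k) x) \<longlonglongrightarrow> 0" unfolding globally_attractive_def by blast
  have "GAS F" if hyp: "(\<exists>U. open U \<and> (0::real^'n) \<in> U \<and>
            bounded ((\<lambda>x. Inf {norm u + norm l | u l.
                        (\<forall>i. g (x, u, l) $ i \<ge> 0) \<and> h (x, u, l) = 0}) ` U))
         \<or> (\<forall>x u l u' l'. V (x, u, l) = V (x, u', l'))"
    using hyp
  proof
    assume indep: "\<forall>x u l u' l'. V (x, u, l) = V (x, u', l')"
    have W1eq: "W1 y = V (y, 0, 0)" for y unfolding W1_def using indep by metis
    have "lyapunov_stable F"
    proof (rule core[OF dec1 attx, where c="V (0,0,0)"], intro allI impI)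
      fix y :: "nat \<Rightarrow> real^'n" assume y: "y \<longlonglongrightarrow> 0"
      have "(\<lambda>j. V (y j, 0, 0)) \<longlonglongrightarrow> V (0, 0, 0)"
        by (rule continuous_on_tendsto_compose[OF V_cont]) (auto intro!: tendsto_intros y)
      then show "\<exists>r. strict_mono r \<and> (\<lambda>j. W1 (y (r j))) \<longlonglongrightarrow> V (0, 0, 0)"
        by (intro exI[of _ id]) (simp add: W1eq strict_mono_def)
    qed
    then show "GAS F" using att unfolding GAS_def by simp
  next
    assume "\<exists>U. open U \<and> (0::real^'n) \<in> U \<and>
            bounded ((\<lambda>x. Inf {norm u + norm l | u l.
                        (\<forall>i. g (x, u, l) $ i \<ge> 0) \<and> h (x, u, l) = 0}) ` U)"
    then obtain U where U: "open U" "(0::real^'n) \<in> U" and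
      bU: "bounded ((\<lambda>x. Inf {norm u + norm l | u l. feas (x,u,l)}) ` U)"
      unfolding feas_def by blast
    obtain B where B: "\<forall>x\<in>U. norm (Inf {norm u + norm l | u l. feas (x,u,l)}) \<le> B"
      using bU unfolding bounded_iff by auto
    define R where "R = B + 1"
    have ex: "\<exists>l. feas (x, \<psi> x, l) \<and> norm (\<psi> x) + norm l \<le> R" if "x \<in> U" for x
    proof -
      define A where "A = {norm u + norm l | u l. feas (x,u,l)}"
      have ne: "A \<noteq> {}" using L1[of x] unfolding A_def by blast
      have "Inf A < R" using B that unfolding A_def R_def by force
      then obtain a where "a \<in> A" "a < R" using cInf_lessD[OF ne] by blast
      then obtain u l where "feas (x,u,l)" "norm u + norm l < R" unfolding A_def by blast
      then show ?thesis using gr by (metis less_imp_le)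
    qed
    define L where "L y = (SOME l. feas (y, \<psi> y, l) \<and> (y \<in> U \<longrightarrow> norm (\<psi> y) + norm l \<le> R))" for y
    have L: "feas (y, \<psi> y, L y) \<and> (y \<in> U \<longrightarrow> norm (\<psi> y) + norm (L y) \<le> R)" for y
    proof -
      have "\<exists>l. feas (y, \<psi> y, l) \<and> (y \<in> U \<longrightarrow> norm (\<psi> y) + norm l \<le> R)"
        using ex L1 by blast
      then show ?thesis unfolding L_def by (rule someI_ex)
    qed
    define P where "P y = (y, \<psi> y, L y)" for y
    define W where "W y = V (P y)" for y
    have dec2: "\<forall>y. W (F y) \<le> W y - norm y ^ 2" unfolding W_def P_def using dec L by blast
    have clS: "closed {p. feas p}"
    proof -
      have "{p. feas p} = (\<Inter>i. {p. 0 \<le> g p $ i}) \<inter> (\<Inter>i. {p. h p $ i = 0})"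
        unfolding feas_def by (auto simp: vec_eq_iff)
      moreover have "closed (\<Inter>i. {p. 0 \<le> g p $ i})"
        by (intro closed_INT ballI closed_Collect_le continuous_on_const poly_map_comp_cont[OF g_poly])
      moreover have "closed (\<Inter>i. {p. h p $ i = 0})"
        by (intro closed_INT ballI closed_Collect_eq continuous_on_const poly_map_comp_cont[OF h_poly])
      ultimately show ?thesis by (simp add: closed_Int)
    qed
    define C where "C = ({p. feas p} \<inter> {p. norm (fst (snd p)) + norm (snd (snd p)) \<le> R})
       \<inter> (cball (0::real^'n) 1 \<times> cball (0::real^'m) R \<times> cball (0::real^'l) R)"
    have cC: "compact C"
    proof -
      have "closed {p::(real^'n)\<times>(real^'m)\<times>(real^'l). norm (fst (snd p)) + norm (snd (snd p)) \<le> R}"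
        by (intro closed_Collect_le continuous_intros)
      then show ?thesis unfolding C_def
        by (intro closed_Int_compact closed_Int clS compact_Times compact_cball)
    qed
    have subq: "\<exists>r z. strict_mono r \<and> (\<lambda>j. P (y (r j))) \<longlonglongrightarrow> z \<and> z \<in> C \<and> fst z = 0"
      if y: "y \<longlonglongrightarrow> 0" for y :: "nat \<Rightarrow> real^'n"
    proof -
      have "open (U \<inter> ball 0 1)" "(0::real^'n) \<in> U \<inter> ball 0 1" using U by auto
      then have "eventually (\<lambda>j. y j \<in> U \<inter> ball 0 1) sequentially"
        using y topological_tendstoD by blast
      then obtain N where N: "\<And>j. j \<ge> N \<Longrightarrow> y j \<in> U \<inter> ball 0 1"
        unfolding eventually_sequentially by blast
      have inC: "P (y (j + N)) \<in> C" for j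
      proof -
        have yj: "y (j + N) \<in> U" "norm (y (j + N)) < 1" using N[of "j+N"] by auto
        have s1: "norm (\<psi> (y (j + N))) + norm (L (y (j + N))) \<le> R" using L yj by blast
        have s2: "norm (\<psi> (y (j + N))) \<le> R" "norm (L (y (j + N))) \<le> R"
          using s1 norm_ge_zero[of "\<psi> (y (j + N))"] norm_ge_zero[of "L (y (j + N))"] by linarith+
        show ?thesis unfolding C_def P_def using L yj s1 s2 by auto
      qed
      obtain z r' where z: "z \<in> C" "strict_mono r'" "((\<lambda>j. P (y (j + N))) \<circ> r') \<longlonglongrightarrow> z"
        using seq_compactE[OF compact_imp_seq_compact[OF cC], of "\<lambda>j. P (y (j + N))"] inC by blast
      define r where "r j = r' j + N" for j
      have r: "strict_mono r" using z(2) unfolding r_def strict_mono_def by auto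
      have lim: "(\<lambda>j. P (y (r j))) \<longlonglongrightarrow> z" using z(3) unfolding r_def o_def .
      have "(\<lambda>j. fst (P (y (r j)))) \<longlonglongrightarrow> fst z" using lim by (rule tendsto_fst)
      then have "(\<lambda>j. y (r j)) \<longlonglongrightarrow> fst z" unfolding P_def by simp
      moreover have "(\<lambda>j. y (r j)) \<longlonglongrightarrow> 0" using LIMSEQ_subseq_LIMSEQ[OF y r] unfolding o_def .
      ultimately have "fst z = 0" using LIMSEQ_unique by blast
      then show ?thesis using r lim z(1) by blast
    qed
    have subV: "\<exists>r z. strict_mono r \<and> (\<lambda>j. W (y (r j))) \<longlonglongrightarrow> V z \<and> z \<in> C \<and> fst z = 0"
      if y: "y \<longlonglongrightarrow> 0" for y :: "nat \<Rightarrow> real^'n"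
    proof -
      obtain r z where rz: "strict_mono r" "(\<lambda>j. P (y (r j))) \<longlonglongrightarrow> z" "z \<in> C" "fst z = 0"
        using subq[OF y] by blast
      have "(\<lambda>j. V (P (y (r j)))) \<longlonglongrightarrow> V z"
        by (rule continuous_on_tendsto_compose[OF V_cont rz(2)]) auto
      then show ?thesis using rz unfolding W_def by blast
    qed
    define Z where "Z = C \<inter> {p. fst p = 0}"
    have cZ: "compact Z" unfolding Z_def
      by (intro compact_Int_closed cC closed_Collect_eq continuous_intros)
    have P0: "P 0 \<in> Z"
    proof -
      have s1: "norm (\<psi> 0) + norm (L 0) \<le> R" using L U(2) by blast
      have s2: "norm (\<psi> 0) \<le> R" "norm (L 0) \<le> R"
        using s1 norm_ge_zero[of "\<psi> 0"] norm_ge_zero[of "L 0"] by linarith+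
      show ?thesis unfolding Z_def C_def P_def using L s1 s2 by auto
    qed
    obtain ps where ps: "ps \<in> Z" "\<forall>t\<in>Z. V ps \<le> V t"
      using continuous_attains_inf[OF cZ _ continuous_on_subset[OF V_cont]] P0 by blast
    obtain us ls where psd: "ps = (0, us, ls)" "feas (0, us, ls)"
      using ps(1) unfolding Z_def C_def by (cases ps) auto
    have F0: "F 0 = 0"
    proof -
      define y where "y k = (F ^^ k) (F (F 0))" for k
      have "y \<longlonglongrightarrow> 0" using attx unfolding y_def by blast
      then obtain r z where rz: "strict_mono r" "(\<lambda>j. W (y (r j))) \<longlonglongrightarrow> V z" "z \<in> C" "fst z = 0"
        using subV by blast
      have "W (F 0) \<le> V ps" using dec[OF psd(2), of "\<psi> (F 0)" "L (F 0)"] L unfolding W_def P_def psd(1) by simp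
      then have "W (F (F 0)) \<le> V ps - norm (F 0) ^ 2" using dec2 by smt
      then have "W (y k) \<le> V ps - norm (F 0) ^ 2" for k
        using mono_iter[OF dec2, where k=k and x="F (F 0)"] unfolding y_def by linarith
      then have "V z \<le> V ps - norm (F 0) ^ 2" using rz(2) by (intro LIMSEQ_le_const2) auto
      moreover have "V ps \<le> V z" using ps(2) rz(3,4) unfolding Z_def by blast
      ultimately have "norm (F 0) ^ 2 \<le> 0" by linarith
      then show ?thesis by simp
    qed
    have cst: "V z = V ps" if zZ: "z \<in> Z" for z
    proof -
      obtain u l where zd: "z = (0, u, l)" "feas (0, u, l)"
        using zZ unfolding Z_def C_def by (cases z) auto
      have "V z \<le> V ps" using dec[OF psd(2), of u l] zd F0 psd(1) by simp
      then show ?thesis using ps(2) zZ by smt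
    qed
    have "lyapunov_stable F"
    proof (rule core[OF dec2 attx, where c="V ps"], intro allI impI)
      fix y :: "nat \<Rightarrow> real^'n" assume y: "y \<longlonglongrightarrow> 0"
      then obtain r z where rz: "strict_mono r" "(\<lambda>j. W (y (r j))) \<longlonglongrightarrow> V z" "z \<in> C" "fst z = 0"
        using subV by blast
      have "V z = V ps" using cst rz(3,4) unfolding Z_def by blast
      then show "\<exists>r. strict_mono r \<and> (\<lambda>j. W (y (r j))) \<longlonglongrightarrow> V ps" using rz by metis
    qed
    then show "GAS F" using att unfolding GAS_def by simp
  qed
  then show ?thesis using att unfolding F_def by blast
qed

end
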